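(* In the setting below, $V=\ker\bar{\phi}$ as subspaces of $D(\mathcal{A})/D(\mathcal{A}')$.
   Context: A complex subspace arrangement in $\mathbb{C}^l$ is a finite set of complex linear subspaces of $\mathbb{C}^l$ with no two distinct members $x\subset y$. For a finite set $\mathcal{C}$ of linear subspaces of a complex vector space $W$ with a linear order, $D(\mathcal{C})$ is the cochain complex over $\mathbb{Q}$ with basis all subsets $\sigma\subseteq\mathcal{C}$, where with $\vee\sigma=\bigcap_{x\in\sigma}x$ ($\vee\emptyset=W$), $\deg\sigma=2\operatorname{codim}_W(\vee\sigma)-|\sigma|$ and for $\sigma=\{x_{i_1},\dots,x_{i_r}\}$ in increasing order, $d\sigma=\sum_{j:\vee(\sigma\setminus\{x_{i_j}\})=\vee\sigma}(-1)^j(\sigma\setminus\{x_{i_j}\})$. Setting: $\mathcal{A}=\{x_0,\dots,x_n\}$ is a complex subspace arrangement in $\mathbb{C}^l$, $\mathcal{A}'=\mathcal{A}\setminus\{x_0\}$; on $\mathcal{A}'$, $y\sim z$ iff $x_0\cap y=x_0\cap z$, with classes $\mathcal{A}_1,\dots,\mathcal{A}_r$; the linear order is $x_0<x_1<\dots<x_n$ with elements of $\mathcal{A}_i$ preceding elements of $\mathcal{A}_j$ whenever $i<j$. $D(\mathcal{A}')$ is the subcomplex of $D(\mathcal{A})$ spanned by subsets not containing $x_0$. $\widetilde{\mathcal{A}''}=\{x_0\cap y\mid y\in\mathcal{A}'\}$, ordered by the order of the corresponding classes, and $D(\widetilde{\mathcal{A}''})$ is formed with ambient space $x_0$. $E=\{(y,z)\in\mathcal{A}'\times\mathcal{A}'\mid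 y\sim z,\ y\ne z\}$. The linear map $\phi\colon D(\mathcal{A})\to D(\widetilde{\mathcal{A}''})$ is: $\phi(\sigma)=0$ if $x_0\notin\sigma$ or if $x_0\in\sigma$ and $\{y,z\}\subseteq\sigma$ for some $(y,z)\in E$; otherwise, for $\sigma=\{x_0,x_{i_1},\dots,x_{i_r}\}$, $\phi(\sigma)=(-1)^r\{x_0\cap x_{i_1},\dots,x_0\cap x_{i_r}\}$. Since $\phi$ vanishes on $D(\mathcal{A}')$ it induces $\bar\phi\colon D(\mathcal{A})/D(\mathcal{A}')\to D(\widetilde{\mathcal{A}''})$. For $(u,v)\in E$, $I_{u,v}$ is the subspace of $D(\mathcal{A})/D(\mathcal{A}')$ spanned by the classes of all $\{x_0,u\}\cup Y-\{x_0,v\}\cup Y$ and all $\{x_0,u,v\}\cup Y$, for $Y\subseteq\mathcal{A}\setminus\{x_0,u,v\}$. Finally $V=\sum_{(u,v)\in E}I_{u,v}$ (with $V=0$ if $E=\emptyset$). *)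

theory Defs
  imports "HOL-Analysis.Analysis"
begin

text \<open>Complex linear subspaces of C^l are subsets of type complex^'l that are
  subspaces for the complex scalar multiplication (*s), i.e. vec.subspace.\<close>

type_synonym 'l sub = "(complex ^ 'l) set"

text \<open>Vectors of the Q-vector space with basis all subsets sigma of C are
  represented as coefficient functions on sets of subspaces.\<close>
type_synonym 'l cochain = "'l sub set \<Rightarrow> rat"

definition subspace_arrangement :: "'l::finite sub set \<Rightarrow> bool" where
  "subspace_arrangement A \<longleftrightarrow> finite A \<and> (\<forall>y\<in>A. vec.subspace y)
     \<and> (\<forall>y\<in>A. \<forall>z\<in>A. y \<subseteq> z \<longrightarrow> y = z)"

definition basis_vec :: "'l sub set \<Rightarrow> 'l cochain" where
  "basis_vec \<sigma> = (\<lambda>\<tau>. if \<tau> = \<sigma> then 1 else 0)"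

definition Dspace :: "'l sub set \<Rightarrow> 'l cochain set" where
  "Dspace C = {c. \<forall>\<sigma>. c \<sigma> \<noteq> 0 \<longrightarrow> \<sigma> \<subseteq> C}"

definition Dsub :: "'l sub \<Rightarrow> 'l sub set \<Rightarrow> 'l cochain set" where
  "Dsub x0 A = {c \<in> Dspace A. \<forall>\<sigma>. c \<sigma> \<noteq> 0 \<longrightarrow> x0 \<notin> \<sigma>}"

definition simrel :: "'l sub \<Rightarrow> 'l sub \<Rightarrow> 'l sub \<Rightarrow> bool" where
  "simrel x0 y z \<longleftrightarrow> x0 \<inter> y = x0 \<inter> z"

definition Epairs :: "'l sub \<Rightarrow> 'l sub set \<Rightarrow> ('l sub \<times> 'l sub) set" where
  "Epairs x0 A = {(y, z). y \<in> A - {x0} \<and> z \<in> A - {x0} \<and> simrel x0 y z \<and> y \<noteq> z}"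

text \<open>phi on basis elements (values in D(A''~), basis = subsets of {x0 \<inter> y}).\<close>
definition phi_basis :: "'l sub \<Rightarrow> 'l sub set \<Rightarrow> 'l sub set \<Rightarrow> 'l cochain" where
  "phi_basis x0 A \<sigma> =
     (if x0 \<notin> \<sigma> \<or> (\<exists>(y, z)\<in>Epairs x0 A. y \<in> \<sigma> \<and> z \<in> \<sigma>) then (\<lambda>_. 0)
      else (\<lambda>\<tau>. (-1) ^ (card \<sigma> - 1) * basis_vec ((\<lambda>y. x0 \<inter> y) ` (\<sigma> - {x0})) \<tau>))"

definition phi :: "'l sub \<Rightarrow> 'l sub set \<Rightarrow> 'l cochain \<Rightarrow> 'l cochain" where
  "phi x0 A c = (\<lambda>\<tau>. \<Sum>\<sigma>\<in>Pow A. c \<sigma> * phi_basis x0 A \<sigma> \<tau>)"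

definition cls :: "'l sub \<Rightarrow> 'l sub set \<Rightarrow> 'l cochain \<Rightarrow> 'l cochain set" where
  "cls x0 A c = {(\<lambda>\<tau>. c \<tau> + d \<tau>) | d. d \<in> Dsub x0 A}"

text \<open>The quotient space D(A)/D(A') as a set of cosets.\<close>
definition quot :: "'l sub \<Rightarrow> 'l sub set \<Rightarrow> 'l cochain set set" where
  "quot x0 A = cls x0 A ` Dspace A"

definition qspan :: "'l cochain set \<Rightarrow> 'l cochain set" where
  "qspan G = {c. \<exists>S a. finite S \<and> S \<subseteq> G \<and> c = (\<lambda>\<tau>. \<Sum>g\<in>S. a g * g \<tau>)}"

definition Igens :: "'l sub \<Rightarrow> 'l sub set \<Rightarrow> 'l sub \<Rightarrow> 'l sub \<Rightarrow> 'l cochain set" where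
  "Igens x0 A u v =
     {(\<lambda>\<tau>. basis_vec (insert x0 (insert u Y)) \<tau> - basis_vec (insert x0 (insert v Y)) \<tau>)
        | Y. Y \<subseteq> A - {x0, u, v}}
   \<union> {basis_vec (insert x0 (insert u (insert v Y))) | Y. Y \<subseteq> A - {x0, u, v}}"

definition Isub :: "'l sub \<Rightarrow> 'l sub set \<Rightarrow> 'l sub \<Rightarrow> 'l sub \<Rightarrow> 'l cochain set set" where
  "Isub x0 A u v = cls x0 A ` qspan (Igens x0 A u v)"

text \<open>V = sum over (u,v) in E of I_{u,v} (the zero subspace if E is empty):
  the span of the classes of all generators.\<close>
definition Vsub :: "'l sub \<Rightarrow> 'l sub set \<Rightarrow> 'l cochain set set" where
  "Vsub x0 A = cls x0 A ` qspan (\<Union>(u, v)\<in>Epairs x0 A. Igens x0 A u v)"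

definition ker_phibar :: "'l sub \<Rightarrow> 'l sub set \<Rightarrow> 'l cochain set set" where
  "ker_phibar x0 A = cls x0 A ` {c \<in> Dspace A. phi x0 A c = (\<lambda>_. 0)}"

end

theory Submission imports Defs "HOL-Library.Function_Algebras" begin

definition sc :: "rat \<Rightarrow> ('a \<Rightarrow> rat) \<Rightarrow> ('a \<Rightarrow> rat)" where
  "sc r f = (\<lambda>t. r * f t)"

interpretation qm: module sc
  by unfold_locales (auto simp: sc_def fun_eq_iff algebra_simps)

lemma sum_fun_apply: "(sum f A) x = (\<Sum>a\<in>A. f a x)"
  by (induction A rule: infinite_finite_induct) auto

lemma qspan_eq: "qspan G = qm.span G"
  unfolding qspan_def qm.span_explicit
  by (auto simp: sum_fun_apply sc_def fun_eq_iff)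

lemma Dspace_alt: "c \<in> Dspace A \<longleftrightarrow> (\<forall>\<sigma>. \<not> \<sigma> \<subseteq> A \<longrightarrow> c \<sigma> = 0)"
  unfolding Dspace_def mem_Collect_eq by meson

lemma Dsub_alt: "c \<in> Dsub x0 A \<longleftrightarrow> (\<forall>\<sigma>. \<not> \<sigma> \<subseteq> A \<or> x0 \<in> \<sigma> \<longrightarrow> c \<sigma> = 0)"
  unfolding Dsub_def Dspace_def mem_Collect_eq by meson

lemma Dspace_subspace: "qm.subspace (Dspace A)"
  unfolding qm.subspace_def sc_def by (simp add: Dspace_alt)

lemma Dsub_subspace: "qm.subspace (Dsub x0 A)"
  unfolding qm.subspace_def sc_def by (simp add: Dsub_alt)

lemma cls_add: "d \<in> Dsub x0 A \<Longrightarrow> cls x0 A (g + d) = cls x0 A g"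
proof -
  assume d: "d \<in> Dsub x0 A"
  have h1: "\<And>e. e \<in> Dsub x0 A \<Longrightarrow> d + e \<in> Dsub x0 A"
    using d Dsub_subspace qm.subspace_add by blast
  have h2: "\<And>e. e \<in> Dsub x0 A \<Longrightarrow> e - d \<in> Dsub x0 A"
    using d Dsub_subspace qm.subspace_diff by blast
  show ?thesis unfolding cls_def
  proof (intro set_eqI iffI)
    fix f assume "f \<in> {\<lambda>\<tau>. (g + d) \<tau> + e \<tau> |e. e \<in> Dsub x0 A}"
    then obtain e where e: "e \<in> Dsub x0 A" "f = (\<lambda>\<tau>. (g + d) \<tau> + e \<tau>)"
      unfolding mem_Collect_eq by (elim exE conjE)
    have "f = (\<lambda>\<tau>. g \<tau> + (d + e) \<tau>)" unfolding e(2) by (simp add: add.assoc)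
    then show "f \<in> {\<lambda>\<tau>. g \<tau> + e \<tau> |e. e \<in> Dsub x0 A}"
      unfolding mem_Collect_eq using h1[OF e(1)] by (intro exI[where x="d + e"] conjI)
  next
    fix f assume "f \<in> {\<lambda>\<tau>. g \<tau> + e \<tau> |e. e \<in> Dsub x0 A}"
    then obtain e where e: "e \<in> Dsub x0 A" "f = (\<lambda>\<tau>. g \<tau> + e \<tau>)"
      unfolding mem_Collect_eq by (elim exE conjE)
    have "f = (\<lambda>\<tau>. (g + d) \<tau> + (e - d) \<tau>)" unfolding e(2) by simp
    then show "f \<in> {\<lambda>\<tau>. (g + d) \<tau> + e \<tau> |e. e \<in> Dsub x0 A}"
      unfolding mem_Collect_eq using h2[OF e(1)] by (intro exI[where x="e - d"] conjI)
  qed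
qed

definition img :: "'l sub \<Rightarrow> 'l sub set \<Rightarrow> 'l sub set" where
  "img x0 \<sigma> = (\<lambda>y. x0 \<inter> y) ` (\<sigma> - {x0})"

definition haspair :: "'l sub \<Rightarrow> 'l sub set \<Rightarrow> 'l sub set \<Rightarrow> bool" where
  "haspair x0 A \<sigma> \<longleftrightarrow> (\<exists>(y, z)\<in>Epairs x0 A. y \<in> \<sigma> \<and> z \<in> \<sigma>)"

lemma phi_basis_alt: "phi_basis x0 A \<sigma> =
  (if x0 \<notin> \<sigma> \<or> haspair x0 A \<sigma> then 0 else (\<lambda>\<tau>. (-1) ^ (card \<sigma> - 1) * basis_vec (img x0 \<sigma>) \<tau>))"
  unfolding phi_basis_def haspair_def img_def by (simp add: zero_fun_def)

lemma Epairs_iff: "(a, b) \<in> Epairs x0 A \<longleftrightarrow>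
   a \<in> A \<and> a \<noteq> x0 \<and> b \<in> A \<and> b \<noteq> x0 \<and> x0 \<inter> a = x0 \<inter> b \<and> a \<noteq> b"
  unfolding Epairs_def simrel_def by simp

lemma Epairs_sym: "(u, v) \<in> Epairs x0 A \<Longrightarrow> (v, u) \<in> Epairs x0 A"
  unfolding Epairs_iff by (elim conjE) simp

lemma swap_pair:
  assumes uv: "(u, v) \<in> Epairs x0 A" and Y: "Y \<subseteq> A - {x0, u, v}"
    and hp: "haspair x0 A (insert x0 (insert u Y))"
  shows "haspair x0 A (insert x0 (insert v Y))"
proof -
  obtain y z where yz: "(y, z) \<in> Epairs x0 A" "y \<in> insert x0 (insert u Y)" "z \<in> insert x0 (insert u Y)"
    using hp unfolding haspair_def by blast
  have yx: "y \<noteq> x0" "z \<noteq> x0" "y \<noteq> z" "x0 \<inter> y = x0 \<inter> z" "y \<in> A" "z \<in> A"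
    using yz(1) unfolding Epairs_iff by blast+
  have uvf: "u \<noteq> x0" "v \<noteq> x0" "u \<noteq> v" "x0 \<inter> u = x0 \<inter> v" "u \<in> A" "v \<in> A"
    using uv unfolding Epairs_iff by blast+
  have vY: "v \<notin> Y" using Y by blast
  show ?thesis
  proof (cases "y = u")
    case True
    then have "z \<in> Y" using yz yx by blast
    moreover have "x0 \<inter> v = x0 \<inter> z" using uvf(4) yx(4) True by simp
    moreover have "v \<noteq> z" using \<open>z \<in> Y\<close> vY by blast
    ultimately have "(v, z) \<in> Epairs x0 A" unfolding Epairs_iff
      using uvf yx by simp
    then show ?thesis unfolding haspair_def using \<open>z \<in> Y\<close> by blast
  next
    case False
    show ?thesis
    proof (cases "z = u")
      case True
      then have "y \<in> Y" using yz yx by blast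
      moreover have "x0 \<inter> y = x0 \<inter> v" using uvf(4) yx(4) True by simp
      moreover have "y \<noteq> v" using \<open>y \<in> Y\<close> vY by blast
      ultimately have "(y, v) \<in> Epairs x0 A" unfolding Epairs_iff
        using uvf yx by simp
      then show ?thesis unfolding haspair_def using \<open>y \<in> Y\<close> by blast
    next
      case False
      then have "y \<in> Y" "z \<in> Y" using yz yx \<open>y \<noteq> u\<close> by blast+
      then show ?thesis unfolding haspair_def using yz(1) by blast
    qed
  qed
qed

lemma swap_phi_basis:
  assumes fin: "finite A" and uv: "(u, v) \<in> Epairs x0 A" and Y: "Y \<subseteq> A - {x0, u, v}"
  shows "phi_basis x0 A (insert x0 (insert u Y)) = phi_basis x0 A (insert x0 (insert v Y))"
proof -
  have hp: "haspair x0 A (insert x0 (insert u Y)) = haspair x0 A (insert x0 (insert v Y))"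
  proof -
    have Y': "Y \<subseteq> A - {x0, v, u}" using Y by blast
    show ?thesis using swap_pair[OF uv Y] swap_pair[OF Epairs_sym[OF uv] Y'] by blast
  qed
  have u: "u \<noteq> x0" "v \<noteq> x0" "u \<noteq> v" "x0 \<inter> u = x0 \<inter> v" using uv unfolding Epairs_iff by blast+
  have fY: "finite Y" using Y fin finite_subset by blast
  have c: "card (insert x0 (insert u Y)) = card (insert x0 (insert v Y))"
  proof -
    have "u \<notin> Y" "v \<notin> Y" "x0 \<notin> Y" using Y by auto
    then show ?thesis using fY u by (simp add: card_insert_if)
  qed
  have i: "img x0 (insert x0 (insert u Y)) = img x0 (insert x0 (insert v Y))"
  proof -
    have "insert x0 (insert u Y) - {x0} = insert u Y" "insert x0 (insert v Y) - {x0} = insert v Y"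
      using Y u(1,2) by blast+
    then show ?thesis unfolding img_def using u(4) by (simp only: image_insert)
  qed
  show ?thesis unfolding phi_basis_alt hp c i by simp
qed


lemma phi_basis_vec:
  assumes "finite A" "\<sigma> \<subseteq> A"
  shows "phi x0 A (basis_vec \<sigma>) = phi_basis x0 A \<sigma>"
proof -
  have "\<And>\<tau>. (\<Sum>\<sigma>'\<in>Pow A. basis_vec \<sigma> \<sigma>' * phi_basis x0 A \<sigma>' \<tau>) = phi_basis x0 A \<sigma> \<tau>"
  proof -
    fix \<tau>
    have "(\<Sum>\<sigma>'\<in>Pow A. basis_vec \<sigma> \<sigma>' * phi_basis x0 A \<sigma>' \<tau>)
       = (\<Sum>\<sigma>'\<in>Pow A. if \<sigma>' = \<sigma> then phi_basis x0 A \<sigma>' \<tau> else 0)"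
      by (rule sum.cong) (auto simp: basis_vec_def)
    also have "\<dots> = phi_basis x0 A \<sigma> \<tau>" using assms by (simp add: sum.delta)
    finally show "?thesis \<tau>" .
  qed
  then show ?thesis unfolding phi_def by auto
qed

lemma phi_add: "phi x0 A (c + d) = phi x0 A c + phi x0 A d"
  unfolding phi_def by (auto simp: fun_eq_iff distrib_right sum.distrib)

lemma phi_diff: "phi x0 A (c - d) = phi x0 A c - phi x0 A d"
  unfolding phi_def by (auto simp: fun_eq_iff left_diff_distrib sum_subtractf)

lemma phi_sc: "phi x0 A (sc r c) = sc r (phi x0 A c)"
  unfolding phi_def sc_def by (auto simp: fun_eq_iff sum_distrib_left mult.assoc)

lemma phi_zero: "phi x0 A 0 = 0"
  unfolding phi_def by (auto simp: fun_eq_iff)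

lemma K_subspace: "qm.subspace {c \<in> Dspace A. phi x0 A c = 0}"
  unfolding qm.subspace_def
proof (intro conjI ballI allI)
  show "0 \<in> {c \<in> Dspace A. phi x0 A c = 0}" by (simp add: phi_zero Dspace_def)
next
  fix c d assume c: "c \<in> {c \<in> Dspace A. phi x0 A c = 0}" and d: "d \<in> {c \<in> Dspace A. phi x0 A c = 0}"
  then show "c + d \<in> {c \<in> Dspace A. phi x0 A c = 0}"
    by (simp add: phi_add Dspace_alt)
next
  fix r c assume c: "c \<in> {c \<in> Dspace A. phi x0 A c = 0}"
  then show "sc r c \<in> {c \<in> Dspace A. phi x0 A c = 0}"
  proof -
    have "phi x0 A (sc r c) = sc r (phi x0 A c)" by (rule phi_sc)
    also have "\<dots> = 0" using c by (simp add: sc_def zero_fun_def)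
    finally show ?thesis using c by (simp add: Dspace_alt sc_def)
  qed
qed

lemma basis_Dspace: "\<sigma> \<subseteq> A \<Longrightarrow> basis_vec \<sigma> \<in> Dspace A"
  by (auto simp: basis_vec_def Dspace_def)

lemma gens_K:
  assumes fin: "finite A" and x0: "x0 \<in> A" and uv: "(u, v) \<in> Epairs x0 A" and g: "g \<in> Igens x0 A u v"
  shows "g \<in> {c \<in> Dspace A. phi x0 A c = 0}"
proof -
  have u: "u \<in> A" "v \<in> A"
    using uv unfolding Epairs_iff by blast+
  from g obtain Y where Y: "Y \<subseteq> A - {x0, u, v}" and
    gg: "g = (\<lambda>\<tau>. basis_vec (insert x0 (insert u Y)) \<tau> - basis_vec (insert x0 (insert v Y)) \<tau>)
       \<or> g = basis_vec (insert x0 (insert u (insert v Y)))"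
    unfolding Igens_def by blast
  show ?thesis
  proof (cases "g = basis_vec (insert x0 (insert u (insert v Y)))")
    case True
    have s: "insert x0 (insert u (insert v Y)) \<subseteq> A" using Y u x0 by auto
    have "haspair x0 A (insert x0 (insert u (insert v Y)))"
      unfolding haspair_def using uv by blast
    then have "phi_basis x0 A (insert x0 (insert u (insert v Y))) = 0"
      unfolding phi_basis_alt by simp
    then show ?thesis using True phi_basis_vec[OF fin s] basis_Dspace[OF s] by simp
  next
    case False
    then have gd: "g = basis_vec (insert x0 (insert u Y)) - basis_vec (insert x0 (insert v Y))"
      using gg by (simp add: fun_diff_def)
    have s1: "insert x0 (insert u Y) \<subseteq> A" and s2: "insert x0 (insert v Y) \<subseteq> A" using Y u x0 by auto
    have "phi x0 A g = 0"
      unfolding gd phi_diff phi_basis_vec[OF fin s1] phi_basis_vec[OF fin s2]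
      using swap_phi_basis[OF fin uv Y] by simp
    moreover have "g \<in> Dspace A"
      unfolding gd using basis_Dspace[OF s1] basis_Dspace[OF s2] Dspace_subspace qm.subspace_diff
      by blast
    ultimately show ?thesis by simp
  qed
qed


definition good :: "'l sub \<Rightarrow> 'l sub set \<Rightarrow> 'l sub set \<Rightarrow> bool" where
  "good x0 A \<sigma> \<longleftrightarrow> \<sigma> \<subseteq> A \<and> x0 \<in> \<sigma> \<and> \<not> haspair x0 A \<sigma>"

lemma good_inj:
  assumes "good x0 A \<sigma>" shows "inj_on (\<lambda>y. x0 \<inter> y) (\<sigma> - {x0})"
proof (rule inj_onI, rule ccontr)
  fix y z assume y: "y \<in> \<sigma> - {x0}" and z: "z \<in> \<sigma> - {x0}" and e: "x0 \<inter> y = x0 \<inter> z" and ne: "y \<noteq> z"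
  have "y \<in> A" "z \<in> A" using y z assms unfolding good_def by blast+
  then have "(y, z) \<in> Epairs x0 A" unfolding Epairs_iff using y z e ne by blast
  then have "haspair x0 A \<sigma>" unfolding haspair_def using y z by blast
  then show False using assms unfolding good_def by blast
qed

lemma good_card:
  assumes fin: "finite A" and g: "good x0 A \<sigma>" shows "card \<sigma> = Suc (card (img x0 \<sigma>))"
proof -
  have f: "finite \<sigma>" using g fin unfolding good_def using finite_subset by blast
  have "card (img x0 \<sigma>) = card (\<sigma> - {x0})" unfolding img_def by (rule card_image[OF good_inj[OF g]])
  moreover have "card \<sigma> = Suc (card (\<sigma> - {x0}))" using card_Suc_Diff1[OF f, of x0] g unfolding good_def by simp
  ultimately show ?thesis by simp
qed

definition Gset :: "'l sub \<Rightarrow> 'l sub set \<Rightarrow> 'l cochain set" where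
  "Gset x0 A = (\<Union>(u, v)\<in>Epairs x0 A. Igens x0 A u v)"

lemma diff_in_G:
  assumes uv: "(u, v) \<in> Epairs x0 A" and Y: "Y \<subseteq> A - {x0, u, v}"
  shows "basis_vec (insert x0 (insert u Y)) - basis_vec (insert x0 (insert v Y)) \<in> Gset x0 A"
proof -
  have "basis_vec (insert x0 (insert u Y)) - basis_vec (insert x0 (insert v Y)) \<in> Igens x0 A u v"
    unfolding Igens_def fun_diff_def using Y by blast
  then show ?thesis unfolding Gset_def using uv by blast
qed

lemma swap_step:
  assumes fin: "finite A" and g1: "good x0 A \<sigma>" and g2: "good x0 A \<sigma>'" and im: "img x0 \<sigma> = img x0 \<sigma>'"
    and ne: "\<sigma> \<noteq> \<sigma>'"
  shows "\<exists>\<sigma>''. good x0 A \<sigma>'' \<and> img x0 \<sigma>'' = img x0 \<sigma> \<and> card (\<sigma>'' - \<sigma>') < card (\<sigma> - \<sigma>')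
     \<and> basis_vec \<sigma> - basis_vec \<sigma>'' \<in> Gset x0 A"
proof -
  have f1: "finite \<sigma>" and f2: "finite \<sigma>'" using g1 g2 fin unfolding good_def using finite_subset by blast+
  have "card \<sigma> = card \<sigma>'" using good_card[OF fin g1] good_card[OF fin g2] im by simp
  then have "\<not> \<sigma> \<subseteq> \<sigma>'" using card_subset_eq[OF f2] ne by blast
  then obtain u where u: "u \<in> \<sigma>" "u \<notin> \<sigma>'" by blast
  have ux: "u \<noteq> x0" using u g2 unfolding good_def by blast
  have uA: "u \<in> A" using u g1 unfolding good_def by blast
  have "x0 \<inter> u \<in> img x0 \<sigma>'" using im u ux unfolding img_def by blast
  then obtain v where v: "v \<in> \<sigma>'" "v \<noteq> x0" "x0 \<inter> v = x0 \<inter> u" unfolding img_def by blast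
  have vA: "v \<in> A" using v g2 unfolding good_def by blast
  have uv_ne: "u \<noteq> v" using u v by blast
  have uv: "(u, v) \<in> Epairs x0 A" unfolding Epairs_iff using uA vA ux v(2) v(3) uv_ne by simp
  have vs: "v \<notin> \<sigma>"
  proof
    assume "v \<in> \<sigma>"
    then have "haspair x0 A \<sigma>" unfolding haspair_def using uv u(1) by blast
    then show False using g1 unfolding good_def by blast
  qed
  define Y where "Y = \<sigma> - {x0, u}"
  have x0s: "x0 \<in> \<sigma>" using g1 unfolding good_def by blast
  have s1: "\<sigma> = insert x0 (insert u Y)" unfolding Y_def using x0s u(1) by blast
  define \<sigma>'' where "\<sigma>'' = insert x0 (insert v Y)"
  have Y: "Y \<subseteq> A - {x0, u, v}" unfolding Y_def using g1 vs unfolding good_def by blast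
  have G: "basis_vec \<sigma> - basis_vec \<sigma>'' \<in> Gset x0 A"
    unfolding \<sigma>''_def using diff_in_G[OF uv Y] s1 by simp
  have sub: "\<sigma>'' \<subseteq> A" unfolding \<sigma>''_def using Y vA g1 unfolding good_def by blast
  have nhp: "\<not> haspair x0 A \<sigma>''"
  proof
    assume "haspair x0 A \<sigma>''"
    then have "haspair x0 A \<sigma>" unfolding \<sigma>''_def using swap_pair[OF Epairs_sym[OF uv], of Y] Y s1
      by (metis Diff_insert2 insert_commute)
    then show False using g1 unfolding good_def by blast
  qed
  have good3: "good x0 A \<sigma>''" unfolding good_def using sub nhp unfolding \<sigma>''_def by blast
  have im3: "img x0 \<sigma>'' = img x0 \<sigma>"
  proof -
    have "\<sigma>'' - {x0} = insert v Y" "\<sigma> - {x0} = insert u Y" unfolding \<sigma>''_def Y_def using x0s u(1) ux v(2) by blast+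
    then show ?thesis unfolding img_def using v(3) by (simp only: image_insert)
  qed
  have "\<sigma>'' - \<sigma>' = (\<sigma> - \<sigma>') - {u}" unfolding \<sigma>''_def Y_def using s1 v(1) x0s g2 unfolding good_def by blast
  moreover have "finite (\<sigma> - \<sigma>')" using f1 by simp
  moreover have "u \<in> \<sigma> - \<sigma>'" using u by blast
  ultimately have "card (\<sigma>'' - \<sigma>') < card (\<sigma> - \<sigma>')" by (metis card_Diff1_less)
  then show ?thesis using good3 im3 G by blast
qed


lemma swap_chain:
  assumes fin: "finite A"
  shows "good x0 A \<sigma> \<Longrightarrow> good x0 A \<sigma>' \<Longrightarrow> img x0 \<sigma> = img x0 \<sigma>' \<Longrightarrow>
    basis_vec \<sigma> - basis_vec \<sigma>' \<in> qm.span (Gset x0 A)"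
proof (induction "card (\<sigma> - \<sigma>')" arbitrary: \<sigma> rule: less_induct)
  case less
  show ?case
  proof (cases "\<sigma> = \<sigma>'")
    case True then show ?thesis using qm.span_zero by simp
  next
    case False
    from swap_step[OF fin less.prems False] obtain \<sigma>'' where
      s: "good x0 A \<sigma>''" "img x0 \<sigma>'' = img x0 \<sigma>" "card (\<sigma>'' - \<sigma>') < card (\<sigma> - \<sigma>')"
        "basis_vec \<sigma> - basis_vec \<sigma>'' \<in> Gset x0 A" by blast
    have "basis_vec \<sigma>'' - basis_vec \<sigma>' \<in> qm.span (Gset x0 A)"
      using less.hyps[OF s(3) s(1) less.prems(2)] s(2) less.prems(3) by simp
    moreover have "basis_vec \<sigma> - basis_vec \<sigma>'' \<in> qm.span (Gset x0 A)"
      using s(4) qm.span_base by blast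
    ultimately have "(basis_vec \<sigma> - basis_vec \<sigma>'') + (basis_vec \<sigma>'' - basis_vec \<sigma>') \<in> qm.span (Gset x0 A)"
      using qm.span_add by blast
    then show ?thesis by simp
  qed
qed

lemma c_expand:
  assumes c: "c \<in> Dspace A" and fin: "finite A"
  shows "c = (\<Sum>\<sigma>\<in>Pow A. sc (c \<sigma>) (basis_vec \<sigma>))"
proof
  fix \<tau>
  have "(\<Sum>\<sigma>\<in>Pow A. sc (c \<sigma>) (basis_vec \<sigma>)) \<tau> = (\<Sum>\<sigma>\<in>Pow A. if \<sigma> = \<tau> then c \<sigma> else 0)"
    unfolding sum_fun_apply sc_def basis_vec_def by (rule sum.cong) auto
  also have "\<dots> = c \<tau>" using c fin by (simp add: sum.delta' Dspace_alt)
  finally show "c \<tau> = (\<Sum>\<sigma>\<in>Pow A. sc (c \<sigma>) (basis_vec \<sigma>)) \<tau>" by simp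
qed

definition Bset :: "'l sub \<Rightarrow> 'l sub set \<Rightarrow> 'l cochain set" where
  "Bset x0 A = {basis_vec \<sigma> | \<sigma>. \<sigma> \<subseteq> A \<and> x0 \<notin> \<sigma>}"

lemma phi_basis_good:
  assumes fin: "finite A" and s: "\<sigma> \<subseteq> A" and gt: "good x0 A \<tau>"
  shows "phi_basis x0 A \<sigma> (img x0 \<tau>) = (if good x0 A \<sigma> \<and> img x0 \<sigma> = img x0 \<tau> then (-1) ^ (card \<tau> - 1) else 0)"
proof (cases "good x0 A \<sigma>")
  case True
  then have "x0 \<in> \<sigma>" "\<not> haspair x0 A \<sigma>" unfolding good_def by blast+
  moreover have "img x0 \<sigma> = img x0 \<tau> \<Longrightarrow> card \<sigma> = card \<tau>"
    using good_card[OF fin True] good_card[OF fin gt] by simp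
  ultimately show ?thesis unfolding phi_basis_alt basis_vec_def using True by auto
next
  case False
  then have "x0 \<notin> \<sigma> \<or> haspair x0 A \<sigma>" using s unfolding good_def by blast
  then show ?thesis unfolding phi_basis_alt using False by auto
qed

lemma ker_in_span:
  assumes fin: "finite A" and x0A: "x0 \<in> A" and c: "c \<in> Dspace A" and pc: "phi x0 A c = 0"
  shows "c \<in> qm.span (Gset x0 A \<union> Bset x0 A)"
proof -
  define R where "R T = (SOME \<sigma>. good x0 A \<sigma> \<and> img x0 \<sigma> = T)" for T
  define rep where "rep \<sigma> = R (img x0 \<sigma>)" for \<sigma>
  have rep: "good x0 A (rep \<sigma>) \<and> img x0 (rep \<sigma>) = img x0 \<sigma>" if "good x0 A \<sigma>" for \<sigma>
    unfolding rep_def R_def by (rule someI[of _ \<sigma>]) (use that in blast)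
  define f where "f \<sigma> = (if good x0 A \<sigma> then sc (c \<sigma>) (basis_vec \<sigma> - basis_vec (rep \<sigma>)) else sc (c \<sigma>) (basis_vec \<sigma>))" for \<sigma>
  define z where "z \<sigma> = (if good x0 A \<sigma> then sc (c \<sigma>) (basis_vec (rep \<sigma>)) else 0)" for \<sigma>
  have "c = (\<Sum>\<sigma>\<in>Pow A. sc (c \<sigma>) (basis_vec \<sigma>))" by (rule c_expand[OF c fin])
  also have "\<dots> = (\<Sum>\<sigma>\<in>Pow A. f \<sigma> + z \<sigma>)"
    by (rule sum.cong) (auto simp: f_def z_def qm.scale_right_distrib[symmetric])
  also have "\<dots> = sum f (Pow A) + sum z (Pow A)" by (rule sum.distrib)
  finally have ce: "c = sum f (Pow A) + sum z (Pow A)" .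
  have fspan: "f \<sigma> \<in> qm.span (Gset x0 A \<union> Bset x0 A)" if s: "\<sigma> \<in> Pow A" for \<sigma>
  proof (cases "good x0 A \<sigma>")
    case True
    then have "basis_vec \<sigma> - basis_vec (rep \<sigma>) \<in> qm.span (Gset x0 A)"
      using swap_chain[OF fin True] rep[OF True] by simp
    then have "basis_vec \<sigma> - basis_vec (rep \<sigma>) \<in> qm.span (Gset x0 A \<union> Bset x0 A)"
      using qm.span_mono[of "Gset x0 A" "Gset x0 A \<union> Bset x0 A"] by blast
    then show ?thesis unfolding f_def using True qm.span_scale by simp
  next
    case False
    have "basis_vec \<sigma> \<in> Gset x0 A \<union> Bset x0 A"
    proof (cases "x0 \<in> \<sigma>")
      case False
      then show ?thesis unfolding Bset_def using s by blast
    next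
      case True
      then have "haspair x0 A \<sigma>" using \<open>\<not> good x0 A \<sigma>\<close> s unfolding good_def by blast
      then obtain u v where uv: "(u, v) \<in> Epairs x0 A" "u \<in> \<sigma>" "v \<in> \<sigma>" unfolding haspair_def by blast
      define Y where "Y = \<sigma> - {x0, u, v}"
      have "\<sigma> = insert x0 (insert u (insert v Y))" unfolding Y_def using uv True by blast
      moreover have "Y \<subseteq> A - {x0, u, v}" unfolding Y_def using s by blast
      ultimately have "basis_vec \<sigma> \<in> Igens x0 A u v" unfolding Igens_def by blast
      then show ?thesis unfolding Gset_def using uv(1) by blast
    qed
    then have "basis_vec \<sigma> \<in> qm.span (Gset x0 A \<union> Bset x0 A)" by (rule qm.span_base)
    then show ?thesis unfolding f_def using False qm.span_scale by simp
  qed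
  have z0: "sum z (Pow A) = 0"
  proof
    fix \<tau>
    have zt: "sum z (Pow A) \<tau> = (\<Sum>\<sigma>\<in>Pow A. if good x0 A \<sigma> \<and> rep \<sigma> = \<tau> then c \<sigma> else 0)"
      unfolding sum_fun_apply z_def sc_def basis_vec_def by (rule sum.cong) auto
    show "sum z (Pow A) \<tau> = 0 \<tau>"
    proof (cases "\<exists>\<sigma>1\<in>Pow A. good x0 A \<sigma>1 \<and> rep \<sigma>1 = \<tau>")
      case False
      then have "sum z (Pow A) \<tau> = 0" unfolding zt by (intro sum.neutral) auto
      then show ?thesis by simp
    next
      case True
      then obtain \<sigma>1 where s1: "good x0 A \<sigma>1" "rep \<sigma>1 = \<tau>" by blast
      have gt: "good x0 A \<tau>" and it: "img x0 \<tau> = img x0 \<sigma>1" using rep[OF s1(1)] s1(2) by auto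
      have iff: "(good x0 A \<sigma> \<and> rep \<sigma> = \<tau>) \<longleftrightarrow> (good x0 A \<sigma> \<and> img x0 \<sigma> = img x0 \<tau>)" for \<sigma>
      proof
        assume a: "good x0 A \<sigma> \<and> rep \<sigma> = \<tau>"
        then show "good x0 A \<sigma> \<and> img x0 \<sigma> = img x0 \<tau>" using rep[of \<sigma>] by auto
      next
        assume a: "good x0 A \<sigma> \<and> img x0 \<sigma> = img x0 \<tau>"
        then have "rep \<sigma> = rep \<sigma>1" unfolding rep_def using it by simp
        then show "good x0 A \<sigma> \<and> rep \<sigma> = \<tau>" using a s1(2) by simp
      qed
      have "0 = phi x0 A c (img x0 \<tau>)" using pc by simp
      also have "\<dots> = (\<Sum>\<sigma>\<in>Pow A. c \<sigma> * phi_basis x0 A \<sigma> (img x0 \<tau>))" unfolding phi_def by simp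
      also have "\<dots> = (\<Sum>\<sigma>\<in>Pow A. (-1) ^ (card \<tau> - 1) * (if good x0 A \<sigma> \<and> img x0 \<sigma> = img x0 \<tau> then c \<sigma> else 0))"
        by (rule sum.cong) (auto simp: phi_basis_good[OF fin _ gt])
      also have "\<dots> = (-1) ^ (card \<tau> - 1) * (\<Sum>\<sigma>\<in>Pow A. if good x0 A \<sigma> \<and> img x0 \<sigma> = img x0 \<tau> then c \<sigma> else 0)"
        by (simp add: sum_distrib_left)
      finally have "(\<Sum>\<sigma>\<in>Pow A. if good x0 A \<sigma> \<and> img x0 \<sigma> = img x0 \<tau> then c \<sigma> else 0) = 0" by simp
      then show ?thesis unfolding zt iff by simp
    qed
  qed
  have "sum f (Pow A) \<in> qm.span (Gset x0 A \<union> Bset x0 A)" using fspan qm.span_sum by blast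
  then show ?thesis using ce z0 by simp
qed


lemma Bset_Dsub: "Bset x0 A \<subseteq> Dsub x0 A"
proof
  fix f assume "f \<in> Bset x0 A"
  then obtain \<sigma> where f: "f = basis_vec \<sigma>" "\<sigma> \<subseteq> A" "x0 \<notin> \<sigma>"
    unfolding Bset_def mem_Collect_eq by (elim exE conjE)
  have "\<forall>\<tau>. \<not> \<tau> \<subseteq> A \<or> x0 \<in> \<tau> \<longrightarrow> basis_vec \<sigma> \<tau> = 0"
    unfolding basis_vec_def using f(2,3) by auto
  then show "f \<in> Dsub x0 A" unfolding f(1) Dsub_alt .
qed

theorem lemma3p2:
  fixes x :: "nat \<Rightarrow> (complex ^ 'l::finite) set" and n :: nat and A :: "(complex ^ 'l) set set"
  assumes A_def: "A = x ` {0..n}"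
    and inj: "inj_on x {0..n}"
    and arr: "subspace_arrangement A"
    and order: "\<And>i j k. 1 \<le> i \<Longrightarrow> i < j \<Longrightarrow> j < k \<Longrightarrow> k \<le> n \<Longrightarrow>
                  simrel (x 0) (x i) (x k) \<Longrightarrow> simrel (x 0) (x i) (x j)"
  shows "Vsub (x 0) A = ker_phibar (x 0) A"
proof -
  have fin: "finite A" unfolding A_def by simp
  have x0A: "x 0 \<in> A" unfolding A_def by simp
  have V: "Vsub (x 0) A = cls (x 0) A ` qm.span (Gset (x 0) A)"
    unfolding Vsub_def Gset_def qspan_eq ..
  have spK: "qm.span (Gset (x 0) A) \<subseteq> {c \<in> Dspace A. phi (x 0) A c = 0}"
  proof (rule qm.span_minimal[OF _ K_subspace])
    show "Gset (x 0) A \<subseteq> {c \<in> Dspace A. phi (x 0) A c = 0}"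
      unfolding Gset_def using gens_K[OF fin x0A] by blast
  qed
  have spB: "qm.span (Bset (x 0) A) \<subseteq> Dsub (x 0) A"
  proof (rule qm.span_minimal[OF _ Dsub_subspace])
    show "Bset (x 0) A \<subseteq> Dsub (x 0) A" by (rule Bset_Dsub)
  qed
  show ?thesis
  proof
    show "Vsub (x 0) A \<subseteq> ker_phibar (x 0) A"
    proof -
      have K': "{c \<in> Dspace A. phi (x 0) A c = (\<lambda>_. 0)} = {c \<in> Dspace A. phi (x 0) A c = 0}"
        by (simp add: zero_fun_def)
      show ?thesis unfolding V ker_phibar_def K' by (rule image_mono[OF spK])
    qed
  next
    show "ker_phibar (x 0) A \<subseteq> Vsub (x 0) A"
    proof
      fix C assume "C \<in> ker_phibar (x 0) A"
      then obtain c where c: "c \<in> {c \<in> Dspace A. phi (x 0) A c = (\<lambda>_. 0)}" and C: "C = cls (x 0) A c"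
        unfolding ker_phibar_def by (elim imageE)
      have c1: "c \<in> Dspace A" and c2: "phi (x 0) A c = 0" using c unfolding zero_fun_def by simp_all
      have "c \<in> qm.span (Gset (x 0) A \<union> Bset (x 0) A)"
        by (rule ker_in_span[OF fin x0A c1 c2])
      then obtain g b where gb: "c = g + b" "g \<in> qm.span (Gset (x 0) A)" "b \<in> qm.span (Bset (x 0) A)"
        unfolding qm.span_Un mem_Collect_eq by (elim exE conjE)
      have "b \<in> Dsub (x 0) A" using spB gb(3) by (rule subsetD)
      then have "C = cls (x 0) A g" unfolding C gb(1) by (rule cls_add)
      then show "C \<in> Vsub (x 0) A" unfolding V using gb(2) by (rule image_eqI)
    qed
  qed
qed

end
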